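(* Let $n\ge2$ and let $\rho=p_0|0^n\rangle\langle0^n|+\sum_{i,j=1}^nB_{ij}|e_i\rangle\langle e_j|$ be an $n$-qubit density operator, where $B$ is a real symmetric positive semidefinite $n\times n$ matrix and $p_0+\mathrm{Tr}B=1$. Then $\rho\in\mathcal S$ if and only if $B_{ii}\ge\sum_{j\ne i}|B_{ij}|$ for every $i=1,\dots,n$.
   Context: $|e_i\rangle$ denotes the computational-basis state with a $1$ on qubit $i$ and $0$ elsewhere. $\mathcal S$ is the $n$-qubit stabilizer polytope, the convex hull of the density matrices of pure stabilizer states $C|0^n\rangle$, $C$ an $n$-qubit Clifford unitary. *)

theory Defs
  imports Complex_Main
begin

text \<open>n-qubit operators are represented as complex matrices
  nat \<Rightarrow> nat \<Rightarrow> complex, of which only the entries with row and column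
  index below 2^n are meaningful.  Index r encodes the computational basis
  state whose qubit k (k < n, 0-indexed) is bit k of r.  Thus the state
  |0^n> has index 0 and |e_i> (a 1 on qubit i) has index 2^i.\<close>

type_synonym op = "nat \<Rightarrow> nat \<Rightarrow> complex"

definition mmul :: "nat \<Rightarrow> op \<Rightarrow> op \<Rightarrow> op" where
  "mmul n A B = (\<lambda>r c. \<Sum>k<2^n. A r k * B k c)"

definition adj :: "op \<Rightarrow> op" where
  "adj A = (\<lambda>r c. cnj (A c r))"

definition ident :: "op" where
  "ident = (\<lambda>r c. if r = c then 1 else 0)"

definition op_eq :: "nat \<Rightarrow> op \<Rightarrow> op \<Rightarrow> bool" where
  "op_eq n A B \<longleftrightarrow> (\<forall>r<2^n. \<forall>c<2^n. A r c = B r c)"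

definition unitary_op :: "nat \<Rightarrow> op \<Rightarrow> bool" where
  "unitary_op n U \<longleftrightarrow> op_eq n (mmul n U (adj U)) ident \<and> op_eq n (mmul n (adj U) U) ident"

text \<open>Pauli string X^x Z^z (x, z bit masks of length n):
  it maps |c> to (-1)^{|z AND c|} |c XOR x>.\<close>
definition pauli :: "nat \<Rightarrow> nat \<Rightarrow> op" where
  "pauli x z = (\<lambda>(r::nat) (c::nat). if r = xor c x
      then (-1) ^ card {k. bit z k \<and> bit c k} else 0)"

definition clifford :: "nat \<Rightarrow> op \<Rightarrow> bool" where
  "clifford n U \<longleftrightarrow> unitary_op n U \<and>
     (\<forall>x<2^n. \<forall>z<2^n. \<exists>ph x' z'. x' < 2^n \<and> z' < 2^n \<and>
        op_eq n (mmul n (mmul n U (pauli x z)) (adj U)) (\<lambda>r c. ph * pauli x' z' r c))"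

text \<open>Density matrix of the pure state C|0^n>.\<close>
definition stab_proj :: "op \<Rightarrow> op" where
  "stab_proj C = (\<lambda>r c. C r 0 * cnj (C c 0))"

definition stab_polytope :: "nat \<Rightarrow> op set" where
  "stab_polytope n = {\<rho>. \<exists>m (w :: nat \<Rightarrow> real) (C :: nat \<Rightarrow> op).
      (\<forall>j<m. 0 \<le> w j \<and> clifford n (C j)) \<and> (\<Sum>j<m. w j) = 1 \<and>
      op_eq n \<rho> (\<lambda>r c. \<Sum>j<m. complex_of_real (w j) * stab_proj (C j) r c)}"

definition density_op :: "nat \<Rightarrow> op \<Rightarrow> bool" where
  "density_op n \<rho> \<longleftrightarrow>
     (\<forall>r<2^n. \<forall>c<2^n. \<rho> c r = cnj (\<rho> r c)) \<and>
     (\<forall>v :: nat \<Rightarrow> complex. 0 \<le> Re (\<Sum>r<2^n. \<Sum>c<2^n. cnj (v r) * \<rho> r c * v c)) \<and>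
     (\<Sum>r<2^n. \<rho> r r) = 1"

definition rho_of :: "nat \<Rightarrow> real \<Rightarrow> (nat \<Rightarrow> nat \<Rightarrow> real) \<Rightarrow> op" where
  "rho_of n p0 B = (\<lambda>r c. (if r = 0 \<and> c = 0 then complex_of_real p0 else 0) +
      (\<Sum>i<n. \<Sum>j<n. if r = 2^i \<and> c = 2^j then complex_of_real (B i j) else 0))"

end

theory Submission
  imports Defs
begin


lemma less_pow_iff_bits: "(x::nat) < 2^n \<longleftrightarrow> (\<forall>k. bit x k \<longrightarrow> k < n)"
proof -
  have "x < 2^n \<longleftrightarrow> take_bit n x = x" by (simp add: take_bit_nat_eq_self_iff)
  also have "\<dots> \<longleftrightarrow> (\<forall>k. bit x k \<longrightarrow> k < n)"
    by (auto simp: bit_eq_iff bit_take_bit_iff)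
  finally show ?thesis .
qed

lemma xor_less_pow: "x < 2^n \<Longrightarrow> y < 2^n \<Longrightarrow> (xor x y :: nat) < 2^n"
  by (auto simp: less_pow_iff_bits bit_xor_iff)

lemma bit_pow_nat [simp]: "bit (2^m::nat) k \<longleftrightarrow> k = m"
  by (simp add: bit_exp_iff)

lemma finite_bits: "finite {k. bit (c::nat) k}"
proof -
  have "{k. bit c k} \<subseteq> {..<c}" using less_pow_iff_bits[of c c] by auto
  then show ?thesis using finite_subset by blast
qed

lemma xor_eq_iff: "(xor a b = (c::nat)) \<longleftrightarrow> a = xor c b"
  by (auto simp: bit_eq_iff bit_xor_iff)

lemma xor_cancel_r [simp]: "xor (xor a b) b = (a::nat)"
  by (auto simp: bit_eq_iff bit_xor_iff)

lemma xor_neq_pow [simp]: "xor c (2^i) \<noteq> (c::nat)"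
  by (auto simp: bit_eq_iff bit_xor_iff)

lemma xor_neq_pow' [simp]: "(c::nat) \<noteq> xor c (2^i)"
  using xor_neq_pow by metis

lemma pow_less_pow: "i < n \<Longrightarrow> (2::nat)^i < 2^n"
  by simp

definition sg :: "nat \<Rightarrow> nat \<Rightarrow> complex" where
  "sg z c = (-1) ^ card {k. bit z k \<and> bit c k}"

lemma neg1_card_symdiff:
  assumes "finite A" "finite B"
  shows "(-1::complex) ^ card ((A - B) \<union> (B - A)) = (-1) ^ card A * (-1) ^ card B"
proof -
  have a: "card A = card (A - B) + card (A \<inter> B)"
  proof -
    have "A = (A - B) \<union> (A \<inter> B)" by blast
    then have "card A = card ((A - B) \<union> (A \<inter> B))" by simp
    also have "\<dots> = card (A - B) + card (A \<inter> B)" using assms by (intro card_Un_disjoint) auto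
    finally show ?thesis .
  qed
  have b: "card B = card (B - A) + card (A \<inter> B)"
  proof -
    have "B = (B - A) \<union> (A \<inter> B)" by blast
    then have "card B = card ((B - A) \<union> (A \<inter> B))" by simp
    also have "\<dots> = card (B - A) + card (A \<inter> B)" using assms by (intro card_Un_disjoint) auto
    finally show ?thesis .
  qed
  have c: "card ((A - B) \<union> (B - A)) = card (A - B) + card (B - A)"
    using assms by (intro card_Un_disjoint) auto
  have "(-1::complex) ^ card A * (-1) ^ card B
      = (-1) ^ (card (A - B) + card (B - A)) * ((-1) ^ card (A \<inter> B)) ^ 2"
    unfolding a b by (simp add: power_add power2_eq_square)
  also have "\<dots> = (-1) ^ (card (A - B) + card (B - A))"
    by (simp add: power_even_eq[symmetric] power_mult[symmetric])
  finally show ?thesis using c by simp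
qed

lemma sg_xor_right: "sg z (xor c d) = sg z c * sg z d"
proof -
  let ?A = "{k. bit z k \<and> bit c k}" and ?B = "{k. bit z k \<and> bit d k}"
  have fA: "finite ?A" by (rule finite_subset[OF _ finite_bits[of c]]) auto
  have fB: "finite ?B" by (rule finite_subset[OF _ finite_bits[of d]]) auto
  have "{k. bit z k \<and> bit (xor c d) k} = (?A - ?B) \<union> (?B - ?A)"
    by (auto simp: bit_xor_iff)
  then show ?thesis unfolding sg_def using neg1_card_symdiff[OF fA fB] by simp
qed

lemma sg_comm: "sg z c = sg c z"
  unfolding sg_def by (simp add: conj_commute)

lemma sg_xor_left: "sg (xor z y) c = sg z c * sg y c"
  by (simp add: sg_comm[of _ c] sg_xor_right)

lemma sg_0 [simp]: "sg 0 c = 1" "sg z 0 = 1"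
  unfolding sg_def by simp_all

lemma sg_pow: "sg (2^k) c = (if bit c k then -1 else 1)"
proof -
  have "{j. bit (2^k::nat) j \<and> bit c j} = (if bit c k then {k} else {})" by auto
  then show ?thesis unfolding sg_def by simp
qed

lemma sg_pow': "sg z (2^k) = (if bit z k then -1 else 1)"
  by (subst sg_comm) (rule sg_pow)

lemma sg_sq [simp]: "sg z c * sg z c = 1"
  unfolding sg_def by (simp add: power_mult_distrib[symmetric])

lemma sg_cnj [simp]: "cnj (sg z c) = sg z c"
  unfolding sg_def by simp

lemma sg_cases: "sg z c = 1 \<or> sg z c = -1"
  unfolding sg_def by (cases "even (card {k. bit z k \<and> bit c k})") (simp_all add: neg_one_even_power neg_one_odd_power)

lemma sum_single:
  assumes "finite S" "a \<in> S" "\<And>k. k \<in> S \<Longrightarrow> k \<noteq> a \<Longrightarrow> f k = 0"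
  shows "sum f S = f a"
proof -
  have "sum f S = f a + sum f (S - {a})" using assms by (simp add: sum.remove)
  also have "sum f (S - {a}) = 0" using assms by (intro sum.neutral) auto
  finally show ?thesis by simp
qed

lemma sum_two:
  assumes "finite S" "a \<in> S" "b \<in> S" "a \<noteq> b" "\<And>k. k \<in> S \<Longrightarrow> k \<noteq> a \<Longrightarrow> k \<noteq> b \<Longrightarrow> f k = 0"
  shows "sum f S = f a + f b"
proof -
  have "sum f S = f a + sum f (S - {a})" using assms by (simp add: sum.remove)
  also have "sum f (S - {a}) = f b" using assms by (intro sum_single) auto
  finally show ?thesis .
qed

lemma mmul_assoc: "mmul n (mmul n A B) C = mmul n A (mmul n B C)"
  unfolding mmul_def
proof (intro ext)
  fix r c
  have "(\<Sum>k<2^n. (\<Sum>j<2^n. A r j * B j k) * C k c) = (\<Sum>k<2^n. \<Sum>j<2^n. A r j * B j k * C k c)"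
    by (simp add: sum_distrib_right)
  also have "\<dots> = (\<Sum>j<2^n. \<Sum>k<2^n. A r j * B j k * C k c)" by (rule sum.swap)
  also have "\<dots> = (\<Sum>j<2^n. A r j * (\<Sum>k<2^n. B j k * C k c))"
    by (simp add: sum_distrib_left mult.assoc)
  finally show "(\<Sum>k<2^n. (\<Sum>j<2^n. A r j * B j k) * C k c) = (\<Sum>j<2^n. A r j * (\<Sum>k<2^n. B j k * C k c))" .
qed

lemma adj_mmul: "adj (mmul n A B) = mmul n (adj B) (adj A)"
  unfolding mmul_def adj_def by (auto intro!: ext simp: mult.commute)

lemma adj_adj [simp]: "adj (adj A) = A"
  unfolding adj_def by simp

lemma mmul_scal_l: "mmul n (\<lambda>r c. a * A r c) B = (\<lambda>r c. a * mmul n A B r c)"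
  unfolding mmul_def by (auto intro!: ext simp: sum_distrib_left mult.assoc)

lemma mmul_scal_r: "mmul n A (\<lambda>r c. a * B r c) = (\<lambda>r c. a * mmul n A B r c)"
  unfolding mmul_def by (auto intro!: ext simp: sum_distrib_left mult.assoc mult.left_commute)

lemma op_eq_refl [simp]: "op_eq n A A"
  unfolding op_eq_def by simp

lemma op_eq_sym: "op_eq n A B \<Longrightarrow> op_eq n B A"
  unfolding op_eq_def by simp

lemma op_eq_trans [trans]: "op_eq n A B \<Longrightarrow> op_eq n B C \<Longrightarrow> op_eq n A C"
  unfolding op_eq_def by simp

lemma op_eq_scal: "op_eq n A B \<Longrightarrow> op_eq n (\<lambda>r c. a * A r c) (\<lambda>r c. a * B r c)"
  unfolding op_eq_def by simp

lemma mmul_cong: "op_eq n A A' \<Longrightarrow> op_eq n B B' \<Longrightarrow> op_eq n (mmul n A B) (mmul n A' B')"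
  unfolding op_eq_def mmul_def by (auto intro!: sum.cong)

lemma mmul_ident_l: "op_eq n (mmul n ident A) A"
  unfolding op_eq_def mmul_def
proof (intro allI impI)
  fix r c :: nat assume "r < 2^n" "c < 2^n"
  then show "(\<Sum>k<2 ^ n. ident r k * A k c) = A r c"
    by (subst sum_single[where a=r]) (auto simp: ident_def)
qed

lemma mmul_ident_r: "op_eq n (mmul n A ident) A"
  unfolding op_eq_def mmul_def
proof (intro allI impI)
  fix r c :: nat assume "r < 2^n" "c < 2^n"
  then show "(\<Sum>k<2 ^ n. A r k * ident k c) = A r c"
    by (subst sum_single[where a=c]) (auto simp: ident_def)
qed



lemma pauli_eq: "pauli x z r c = (if r = xor c x then sg z c else 0)"
  by (simp add: pauli_def sg_def)

definition spauli :: "complex \<Rightarrow> nat \<Rightarrow> nat \<Rightarrow> op" where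
  "spauli p x z = (\<lambda>r c. p * pauli x z r c)"

lemma xor_assoc_comm: "xor (xor c x2) x1 = xor c (xor x1 (x2::nat))"
  by (auto simp: bit_eq_iff bit_xor_iff)

lemma mmul_pauli:
  assumes "c < 2^n" "x2 < 2^n"
  shows "mmul n (pauli x1 z1) (pauli x2 z2) r c = sg z1 x2 * pauli (xor x1 x2) (xor z1 z2) r c"
proof -
  have "mmul n (pauli x1 z1) (pauli x2 z2) r c = pauli x1 z1 r (xor c x2) * pauli x2 z2 (xor c x2) c"
    unfolding mmul_def
    by (rule sum_single) (auto simp: pauli_eq xor_less_pow assms)
  also have "\<dots> = sg z1 x2 * pauli (xor x1 x2) (xor z1 z2) r c"
    by (simp add: pauli_eq xor_assoc_comm sg_xor_right sg_xor_left)
  finally show ?thesis .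
qed

lemma mmul_spauli:
  assumes "x2 < 2^n"
  shows "op_eq n (mmul n (spauli p x1 z1) (spauli q x2 z2)) (spauli (p * q * sg z1 x2) (xor x1 x2) (xor z1 z2))"
  unfolding spauli_def mmul_scal_l mmul_scal_r op_eq_def
  using assms by (simp add: mmul_pauli)

lemma adj_pauli: "adj (pauli x z) = spauli (sg z x) x z"
  unfolding adj_def spauli_def
  by (auto intro!: ext simp: pauli_eq xor_eq_iff sg_xor_right)

lemma adj_spauli: "adj (spauli p x z) = spauli (cnj p * sg z x) x z"
  unfolding spauli_def using adj_pauli[of x z]
  unfolding adj_def spauli_def by (auto simp: fun_eq_iff)

lemma pauli_spauli: "pauli x z = spauli 1 x z"
  by (simp add: spauli_def)

lemma pauli_00: "pauli 0 0 = ident"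
  by (auto intro!: ext simp: pauli_eq ident_def)

lemma spauli_10: "spauli 1 0 0 = ident"
  by (simp add: pauli_00 flip: pauli_spauli)

lemma clifford_pauli:
  assumes "x < 2^n"
  shows "clifford n (pauli x z)"
proof -
  have u1: "op_eq n (mmul n (pauli x z) (adj (pauli x z))) ident"
    using mmul_spauli[OF assms, of 1 x z "sg z x" z] unfolding adj_pauli
    by (simp add: pauli_00 flip: pauli_spauli)
  have u2: "op_eq n (mmul n (adj (pauli x z)) (pauli x z)) ident"
    using mmul_spauli[OF assms, of "sg z x" x z 1 z] unfolding adj_pauli
    by (simp add: pauli_00 flip: pauli_spauli)
  have c: "\<exists>ph x' z'. x' < 2^n \<and> z' < 2^n \<and>
        op_eq n (mmul n (mmul n (pauli x z) (pauli a b)) (adj (pauli x z))) (\<lambda>r c. ph * pauli x' z' r c)"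
    if "a < 2^n" "b < 2^n" for a b
  proof -
    have "op_eq n (mmul n (mmul n (pauli x z) (pauli a b)) (adj (pauli x z)))
        (mmul n (spauli (sg z a) (xor x a) (xor z b)) (spauli (sg z x) x z))"
      unfolding adj_pauli
      by (rule mmul_cong[OF _ op_eq_refl]) (use mmul_spauli[OF that(1), of 1 x z 1 b] in \<open>simp add: pauli_spauli\<close>)
    also have "op_eq n \<dots> (spauli (sg z a * sg z x * sg (xor z b) x) (xor (xor x a) x) (xor (xor z b) z))"
      by (rule mmul_spauli[OF assms])
    finally have *: "op_eq n (mmul n (mmul n (pauli x z) (pauli a b)) (adj (pauli x z)))
      (spauli (sg z a * sg z x * sg (xor z b) x) (xor (xor x a) x) (xor (xor z b) z))" .
    have "(xor (xor x a) x) = a" "xor (xor z b) z = b"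
      by (auto simp: bit_eq_iff bit_xor_iff)
    with * have "op_eq n (mmul n (mmul n (pauli x z) (pauli a b)) (adj (pauli x z)))
         (\<lambda>r c. (sg z a * sg z x * sg (xor z b) x) * pauli a b r c)" unfolding spauli_def by simp
    then show ?thesis using that by blast
  qed
  show ?thesis unfolding clifford_def unitary_op_def using u1 u2 c by blast
qed

lemma clifford_conjD:
  assumes "clifford n U" "x < 2^n" "z < 2^n"
  obtains ph x' z' where "x' < 2^n" "z' < 2^n"
    "op_eq n (mmul n (mmul n U (pauli x z)) (adj U)) (\<lambda>r c. ph * pauli x' z' r c)"
proof -
  have "\<forall>x<2^n. \<forall>z<2^n. \<exists>ph x' z'. x' < 2^n \<and> z' < 2^n \<and>
        op_eq n (mmul n (mmul n U (pauli x z)) (adj U)) (\<lambda>r c. ph * pauli x' z' r c)"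
    using assms(1) unfolding clifford_def by (rule conjunct2)
  then show ?thesis using assms(2,3) that by blast
qed

lemma clifford_mmul:
  assumes U: "clifford n U" and V: "clifford n V"
  shows "clifford n (mmul n U V)"
proof -
  have uU: "op_eq n (mmul n U (adj U)) ident" "op_eq n (mmul n (adj U) U) ident"
    using U by (simp_all add: clifford_def unitary_op_def)
  have uV: "op_eq n (mmul n V (adj V)) ident" "op_eq n (mmul n (adj V) V) ident"
    using V by (simp_all add: clifford_def unitary_op_def)
  have e1: "mmul n (mmul n U V) (adj (mmul n U V)) = mmul n U (mmul n (mmul n V (adj V)) (adj U))"
    by (simp only: mmul_assoc adj_mmul)
  have "op_eq n (mmul n U (mmul n (mmul n V (adj V)) (adj U))) (mmul n U (mmul n ident (adj U)))"
    by (rule mmul_cong[OF op_eq_refl mmul_cong[OF uV(1) op_eq_refl]])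
  also have "op_eq n \<dots> (mmul n U (adj U))"
    by (rule mmul_cong[OF op_eq_refl mmul_ident_l])
  also have "op_eq n \<dots> ident" by (rule uU)
  finally have u1: "op_eq n (mmul n (mmul n U V) (adj (mmul n U V))) ident" unfolding e1 .
  have e2: "mmul n (adj (mmul n U V)) (mmul n U V) = mmul n (adj V) (mmul n (mmul n (adj U) U) V)"
    by (simp only: mmul_assoc adj_mmul)
  have "op_eq n (mmul n (adj V) (mmul n (mmul n (adj U) U) V)) (mmul n (adj V) (mmul n ident V))"
    by (rule mmul_cong[OF op_eq_refl mmul_cong[OF uU(2) op_eq_refl]])
  also have "op_eq n \<dots> (mmul n (adj V) V)"
    by (rule mmul_cong[OF op_eq_refl mmul_ident_l])
  also have "op_eq n \<dots> ident" by (rule uV)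
  finally have u2: "op_eq n (mmul n (adj (mmul n U V)) (mmul n U V)) ident" unfolding e2 .
  have c: "\<exists>ph x' z'. x' < 2^n \<and> z' < 2^n \<and>
        op_eq n (mmul n (mmul n (mmul n U V) (pauli x z)) (adj (mmul n U V))) (\<lambda>r c. ph * pauli x' z' r c)"
    if xz: "x < 2^n" "z < 2^n" for x z
  proof -
    obtain ph1 x1 z1 where o1: "x1 < 2^n" "z1 < 2^n"
      "op_eq n (mmul n (mmul n V (pauli x z)) (adj V)) (\<lambda>r c. ph1 * pauli x1 z1 r c)"
      by (rule clifford_conjD[OF V xz])
    obtain ph2 x2 z2 where o2: "x2 < 2^n" "z2 < 2^n"
      "op_eq n (mmul n (mmul n U (pauli x1 z1)) (adj U)) (\<lambda>r c. ph2 * pauli x2 z2 r c)"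
      by (rule clifford_conjD[OF U o1(1,2)])
    have e3: "mmul n (mmul n (mmul n U V) (pauli x z)) (adj (mmul n U V))
        = mmul n (mmul n U (mmul n (mmul n V (pauli x z)) (adj V))) (adj U)"
      by (simp only: mmul_assoc adj_mmul)
    have "op_eq n (mmul n (mmul n U (mmul n (mmul n V (pauli x z)) (adj V))) (adj U)) (mmul n (mmul n U (\<lambda>r c. ph1 * pauli x1 z1 r c)) (adj U))"
      by (rule mmul_cong[OF mmul_cong[OF op_eq_refl o1(3)] op_eq_refl])
    also have "\<dots> = (\<lambda>r c. ph1 * mmul n (mmul n U (pauli x1 z1)) (adj U) r c)"
      by (simp add: mmul_scal_l mmul_scal_r)
    also have "op_eq n \<dots> (\<lambda>r c. ph1 * (ph2 * pauli x2 z2 r c))"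
      by (intro op_eq_scal o2)
    finally show ?thesis unfolding e3 using o2 by (intro exI[of _ "ph1 * ph2"] exI[of _ x2] exI[of _ z2]) (simp add: mult.assoc)
  qed
  show ?thesis unfolding clifford_def unitary_op_def using u1 u2 c by blast
qed



section \<open>Permutation gates\<close>

definition perm_op :: "(nat \<Rightarrow> nat) \<Rightarrow> op" where
  "perm_op \<pi> = (\<lambda>r c. if r = \<pi> c then 1 else 0)"

lemma adj_perm_op:
  assumes "\<And>c. \<pi> (\<pi> c) = c"
  shows "adj (perm_op \<pi>) = perm_op \<pi>"
  unfolding adj_def perm_op_def by (auto intro!: ext) (metis assms)+

lemma mmul_perm_l:
  assumes "\<And>c. \<pi> (\<pi> c) = c" "\<And>c. c < 2^n \<Longrightarrow> \<pi> c < 2^n" "r < 2^n"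
  shows "mmul n (perm_op \<pi>) A r c = A (\<pi> r) c"
  unfolding mmul_def
proof (subst sum_single[where a="\<pi> r"])
  show "perm_op \<pi> r k * A k c = 0" if "k \<in> {..<2^n}" "k \<noteq> \<pi> r" for k
  proof -
    have "r \<noteq> \<pi> k" using that assms(1) by metis
    then show ?thesis by (simp add: perm_op_def)
  qed
qed (auto simp: perm_op_def assms)

lemma mmul_perm_r:
  assumes "c < 2^n" "\<And>c. c < 2^n \<Longrightarrow> \<pi> c < 2^n"
  shows "mmul n A (perm_op \<pi>) r c = A r (\<pi> c)"
  unfolding mmul_def
  by (subst sum_single[where a="\<pi> c"]) (auto simp: perm_op_def assms)

lemma conj_perm:
  assumes "\<And>c. \<pi> (\<pi> c) = c" "\<And>c. c < 2^n \<Longrightarrow> \<pi> c < 2^n" "r < 2^n" "c < 2^n"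
  shows "mmul n (mmul n (perm_op \<pi>) P) (adj (perm_op \<pi>)) r c = P (\<pi> r) (\<pi> c)"
  unfolding adj_perm_op[of \<pi>, OF assms(1)]
  by (simp add: mmul_perm_r[OF assms(4) assms(2)] mmul_perm_l[OF assms(1,2,3)])

lemma clifford_perm:
  assumes inv: "\<And>c. \<pi> (\<pi> c) = c" and bd: "\<And>c. c < 2^n \<Longrightarrow> \<pi> c < 2^n"
    and pc: "\<And>x z. x < 2^n \<Longrightarrow> z < 2^n \<Longrightarrow> \<exists>x' z'. x' < 2^n \<and> z' < 2^n \<and>
          (\<forall>r c. pauli x z (\<pi> r) (\<pi> c) = pauli x' z' r c)"
  shows "clifford n (perm_op \<pi>)"
proof -
  have u: "op_eq n (mmul n (perm_op \<pi>) (adj (perm_op \<pi>))) ident"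
    unfolding op_eq_def adj_perm_op[of \<pi>, OF inv]
  proof (intro allI impI)
    fix r c :: nat assume rc: "r < 2^n" "c < 2^n"
    have "mmul n (perm_op \<pi>) (perm_op \<pi>) r c = perm_op \<pi> (\<pi> r) c"
      using mmul_perm_l[OF inv bd rc(1)] by blast
    also have "\<dots> = ident r c" unfolding perm_op_def ident_def by (metis inv)
    finally show "mmul n (perm_op \<pi>) (perm_op \<pi>) r c = ident r c" .
  qed
  have c: "\<exists>ph x' z'. x' < 2^n \<and> z' < 2^n \<and>
        op_eq n (mmul n (mmul n (perm_op \<pi>) (pauli x z)) (adj (perm_op \<pi>))) (\<lambda>r c. ph * pauli x' z' r c)"
    if xz: "x < 2^n" "z < 2^n" for x z
  proof -
    obtain x' z' where "x' < 2^n" "z' < 2^n" "\<forall>r c. pauli x z (\<pi> r) (\<pi> c) = pauli x' z' r c"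
      using pc[OF xz] by blast
    then show ?thesis
      by (intro exI[of _ 1] exI[of _ x'] exI[of _ z']) (simp add: op_eq_def conj_perm[OF inv bd])
  qed
  show ?thesis unfolding clifford_def unitary_op_def
    using u c adj_perm_op[of \<pi>, OF inv] by simp
qed

definition cnf :: "nat \<Rightarrow> nat \<Rightarrow> nat \<Rightarrow> nat" where
  "cnf i l c = (if bit c i then xor c (2^l) else c)"

lemma bit_cnf: "bit (cnf i l c) k \<longleftrightarrow> (bit c k \<noteq> (k = l \<and> bit c i))"
  unfolding cnf_def by (auto simp: bit_xor_iff)

lemma cnf_inv: "i \<noteq> l \<Longrightarrow> cnf i l (cnf i l c) = c"
  by (auto simp: bit_eq_iff bit_cnf)

lemma cnf_less: "l < n \<Longrightarrow> c < 2^n \<Longrightarrow> cnf i l c < 2^n"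
  by (auto simp: cnf_def intro: xor_less_pow)

lemma cnf_xor: "cnf i l (xor a b) = xor (cnf i l a) (cnf i l b)"
  by (auto simp: bit_eq_iff bit_cnf bit_xor_iff)

definition zf :: "nat \<Rightarrow> nat \<Rightarrow> nat \<Rightarrow> nat" where
  "zf i l z = (if bit z l then xor z (2^i) else z)"

lemma sg_cnf: "sg z (cnf i l c) = sg (zf i l z) c"
  unfolding cnf_def zf_def by (auto simp: sg_xor_right sg_xor_left sg_pow sg_pow')

lemma clifford_cn:
  assumes "i < n" "l < n" "i \<noteq> l"
  shows "clifford n (perm_op (cnf i l))"
proof (rule clifford_perm)
  show "cnf i l (cnf i l c) = c" for c using assms by (simp add: cnf_inv)
  show "c < 2^n \<Longrightarrow> cnf i l c < 2^n" for c using assms by (simp add: cnf_less)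
  fix x z :: nat assume xz: "x < 2^n" "z < 2^n"
  have "pauli x z (cnf i l r) (cnf i l c) = pauli (cnf i l x) (zf i l z) r c" for r c
  proof -
    have "cnf i l r = xor (cnf i l c) x \<longleftrightarrow> r = xor c (cnf i l x)"
      by (metis assms(3) cnf_inv cnf_xor)
    then show ?thesis by (simp add: pauli_eq sg_cnf)
  qed
  moreover have "cnf i l x < 2^n" using assms xz by (simp add: cnf_less)
  moreover have "zf i l z < 2^n" using assms xz by (auto simp: zf_def intro: xor_less_pow)
  ultimately show "\<exists>x' z'. x' < 2^n \<and> z' < 2^n \<and> (\<forall>r c. pauli x z (cnf i l r) (cnf i l c) = pauli x' z' r c)"
    by blast
qed



section \<open>Hadamard\<close>

definition hh :: complex where "hh = complex_of_real (1 / sqrt 2)"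

lemma hh_sq: "hh * hh = 1/2"
  unfolding hh_def by (simp flip: of_real_mult)

lemma cnj_hh [simp]: "cnj hh = hh"
  unfolding hh_def by simp

definition hq :: "nat \<Rightarrow> op" where
  "hq i = (\<lambda>r c. if r = c then (if bit c i then - hh else hh)
      else if r = xor c (2^i) then hh else 0)"

lemma adj_hq: "adj (hq i) = hq i"
  unfolding adj_def hq_def
  by (auto intro!: ext simp: xor_eq_iff)

lemma xor_cancel_left_iff [simp]: "xor a b = xor a c \<longleftrightarrow> b = (c::nat)"
  by (metis xor_cancel_r xor.commute)

lemma xor_self_left_iff [simp]: "xor a b = a \<longleftrightarrow> b = (0::nat)"
  by (metis xor.comm_neutral xor_cancel_left_iff)

lemma xor_self_left_iff' [simp]: "a = xor a b \<longleftrightarrow> b = (0::nat)"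
  by (metis xor_self_left_iff)

lemma hq_conj_entry:
  assumes "i < n" "r < 2^n" "c < 2^n" "x < 2^n"
  shows "mmul n (mmul n (hq i) (pauli x z)) (hq i) r c =
    (if bit x i \<and> bit z i then -1 else 1) *
      pauli (if bit x i = bit z i then x else xor x (2^i)) (if bit x i = bit z i then z else xor z (2^i)) r c"
proof -
  have s1: "mmul n (hq i) (pauli x z) r k = hq i r (xor k x) * sg z k" if "k < 2^n" for k
    unfolding mmul_def
    by (subst sum_single[where a="xor k x"]) (auto simp: pauli_eq xor_less_pow that assms)
  have ci: "xor c (2^i) < 2^n" using assms by (intro xor_less_pow) auto
  have "mmul n (mmul n (hq i) (pauli x z)) (hq i) r c =
     mmul n (hq i) (pauli x z) r c * hq i c c + mmul n (hq i) (pauli x z) r (xor c (2^i)) * hq i (xor c (2^i)) c"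
    unfolding mmul_def[of n "mmul n (hq i) (pauli x z)" "hq i"]
    by (rule sum_two) (auto simp: ci assms hq_def)
  also have "\<dots> = hq i r (xor c x) * sg z c * hq i c c +
      hq i r (xor (xor c (2^i)) x) * sg z (xor c (2^i)) * hq i (xor c (2^i)) c"
    by (simp add: s1 ci assms)
  also have "\<dots> = (if bit x i \<and> bit z i then -1 else 1) *
      pauli (if bit x i = bit z i then x else xor x (2^i)) (if bit x i = bit z i then z else xor z (2^i)) r c"
    unfolding hq_def pauli_eq
    apply (simp add: xor.assoc sg_xor_right sg_xor_left sg_pow sg_pow' bit_xor_iff)
    apply (cases "bit c i"; cases "bit x i"; cases "bit z i")
    apply (auto simp: algebra_simps hh_sq xor.commute[of "2^i"])
    done
  finally show ?thesis .
qed



lemma clifford_hq: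
  assumes "i < n"
  shows "clifford n (hq i)"
proof -
  have e: "op_eq n (mmul n (mmul n (hq i) (pauli 0 0)) (hq i)) ident"
    using hq_conj_entry[OF assms, of _ _ 0 0] by (simp add: op_eq_def pauli_00)
  have "op_eq n (mmul n (mmul n (hq i) (pauli 0 0)) (hq i)) (mmul n (hq i) (hq i))"
    unfolding pauli_00 by (rule mmul_cong[OF mmul_ident_r op_eq_refl])
  then have u: "op_eq n (mmul n (hq i) (hq i)) ident"
    using e op_eq_sym op_eq_trans by blast
  have c: "\<exists>ph x' z'. x' < 2^n \<and> z' < 2^n \<and>
        op_eq n (mmul n (mmul n (hq i) (pauli x z)) (hq i)) (\<lambda>r c. ph * pauli x' z' r c)"
    if xz: "x < 2^n" "z < 2^n" for x z
  proof -
    have "xor x (2^i) < 2^n" "xor z (2^i) < 2^n" using xz assms by (auto intro!: xor_less_pow)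
    then show ?thesis unfolding op_eq_def
      using hq_conj_entry[OF assms _ _ xz(1)] xz
      by (intro exI[of _ "(if bit x i \<and> bit z i then -1 else 1)"]
          exI[of _ "(if bit x i = bit z i then x else xor x (2^i))"]
          exI[of _ "(if bit x i = bit z i then z else xor z (2^i))"]) auto
  qed
  show ?thesis unfolding clifford_def unitary_op_def adj_hq using u c by simp
qed

definition zsel :: "bool \<Rightarrow> nat \<Rightarrow> nat" where
  "zsel s l = (if s then 0 else 2^l)"

definition gate :: "nat \<Rightarrow> nat \<Rightarrow> nat \<Rightarrow> bool \<Rightarrow> op" where
  "gate n i l s = mmul n (mmul n (pauli (2^i) (zsel s l)) (perm_op (cnf i l))) (hq i)"

lemma clifford_gate:
  assumes "i < n" "l < n" "i \<noteq> l"
  shows "clifford n (gate n i l s)"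
  unfolding gate_def
  using assms by (intro clifford_mmul clifford_pauli clifford_cn clifford_hq) auto

lemma gate_col:
  assumes "i < n" "l < n" "i \<noteq> l" "r < 2^n"
  shows "gate n i l s r 0 = hh * ((if r = 2^i then 1 else 0) + (if s then 1 else -1) * (if r = 2^l then 1 else 0))"
proof -
  have pi: "(2::nat)^i < 2^n" using assms by simp
  have bd: "\<And>c. c < 2^n \<Longrightarrow> cnf i l c < 2^n" using assms by (simp add: cnf_less)
  have m: "mmul n (pauli (2^i) (zsel s l)) (perm_op (cnf i l)) r k = pauli (2^i) (zsel s l) r (cnf i l k)"
    if "k < 2^n" for k
    by (rule mmul_perm_r[OF that bd])
  have "gate n i l s r 0 = mmul n (pauli (2^i) (zsel s l)) (perm_op (cnf i l)) r 0 * hh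
       + mmul n (pauli (2^i) (zsel s l)) (perm_op (cnf i l)) r (2^i) * hh"
    unfolding gate_def mmul_def[of n "mmul n (pauli (2^i) (zsel s l)) (perm_op (cnf i l))" "hq i"]
    by (subst sum_two[where a=0 and b="2^i"]) (auto simp: pi hq_def)
  also have "\<dots> = pauli (2^i) (zsel s l) r 0 * hh + pauli (2^i) (zsel s l) r (xor (2^i) (2^l)) * hh"
    using pi by (simp add: m cnf_def)
  also have "\<dots> = hh * ((if r = 2^i then 1 else 0) + (if s then 1 else -1) * (if r = 2^l then 1 else 0))"
  proof -
    have "xor (xor (2^i) (2^l)) (2^i) = (2::nat)^l" by (auto simp: bit_eq_iff bit_xor_iff)
    moreover have "sg (zsel s l) (xor (2^i) (2^l)) = (if s then 1 else -1)"
      using assms(3) by (auto simp: zsel_def sg_pow bit_xor_iff)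
    ultimately show ?thesis using assms(3) by (simp add: pauli_eq algebra_simps)
  qed
  finally show ?thesis .
qed



section \<open>Cone of stabilizer mixtures\<close>

definition SP :: "nat \<Rightarrow> real \<Rightarrow> op \<Rightarrow> bool" where
  "SP n t \<rho> \<longleftrightarrow> (\<exists>m (w::nat \<Rightarrow> real) (C::nat \<Rightarrow> op). (\<forall>j<m. 0 \<le> w j \<and> clifford n (C j)) \<and>
     (\<Sum>j<m. w j) = t \<and> op_eq n \<rho> (\<lambda>r c. \<Sum>j<m. complex_of_real (w j) * stab_proj (C j) r c))"

lemma stab_polytope_SP: "\<rho> \<in> stab_polytope n \<longleftrightarrow> SP n 1 \<rho>"
  unfolding stab_polytope_def SP_def by simp

lemma SP_zero: "SP n 0 (\<lambda>r c. 0)"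
  unfolding SP_def by (rule exI[of _ 0]) (simp add: op_eq_def)

lemma SP_single:
  assumes "clifford n C" "0 \<le> a"
  shows "SP n a (\<lambda>r c. complex_of_real a * stab_proj C r c)"
  unfolding SP_def using assms
  by (intro exI[of _ 1] exI[of _ "\<lambda>_. a"] exI[of _ "\<lambda>_. C"]) (simp add: op_eq_def)

lemma sum_split_add: "(\<Sum>j<m1+(m2::nat). f j) = (\<Sum>j<m1. f j) + (\<Sum>j<m2. (f (m1 + j) :: 'a::comm_monoid_add))"
  by (induct m2) (simp_all add: add.assoc)

lemma SP_add:
  assumes "SP n t1 \<rho>1" "SP n t2 \<rho>2"
  shows "SP n (t1 + t2) (\<lambda>r c. \<rho>1 r c + \<rho>2 r c)"
proof -
  obtain m1 w1 C1 where 1: "\<forall>j<(m1::nat). 0 \<le> w1 j \<and> clifford n (C1 j)" "(\<Sum>j<m1. w1 j) = t1"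
    "op_eq n \<rho>1 (\<lambda>r c. \<Sum>j<m1. complex_of_real (w1 j) * stab_proj (C1 j) r c)"
    using assms(1) unfolding SP_def by blast
  obtain m2 w2 C2 where 2: "\<forall>j<(m2::nat). 0 \<le> w2 j \<and> clifford n (C2 j)" "(\<Sum>j<m2. w2 j) = t2"
    "op_eq n \<rho>2 (\<lambda>r c. \<Sum>j<m2. complex_of_real (w2 j) * stab_proj (C2 j) r c)"
    using assms(2) unfolding SP_def by blast
  define w where "w j = (if j < m1 then w1 j else w2 (j - m1))" for j
  define C where "C j = (if j < m1 then C1 j else C2 (j - m1))" for j
  have a: "\<forall>j<m1+m2. 0 \<le> w j \<and> clifford n (C j)"
    using 1(1) 2(1) unfolding w_def C_def by auto
  have b: "(\<Sum>j<m1+m2. w j) = t1 + t2"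
    unfolding sum_split_add using 1(2) 2(2) by (simp add: w_def)
  have c: "op_eq n (\<lambda>r c. \<rho>1 r c + \<rho>2 r c) (\<lambda>r c. \<Sum>j<m1+m2. complex_of_real (w j) * stab_proj (C j) r c)"
    unfolding sum_split_add using 1(3) 2(3) by (simp add: w_def C_def op_eq_def)
  show ?thesis unfolding SP_def using a b c by blast
qed

lemma SP_sum:
  assumes "finite S" "\<And>k. k \<in> S \<Longrightarrow> SP n (t k) (\<rho> k)"
  shows "SP n (\<Sum>k\<in>S. t k) (\<lambda>r c. \<Sum>k\<in>S. \<rho> k r c)"
  using assms
proof (induction S rule: finite_induct)
  case empty
  then show ?case using SP_zero by simp
next
  case (insert x F)
  then show ?case using SP_add[of n "t x" "\<rho> x" "sum t F" "\<lambda>r c. \<Sum>k\<in>F. \<rho> k r c"] by simp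
qed

lemma SP_cong:
  assumes "SP n t \<rho>" "op_eq n \<rho>' \<rho>" "t = t'"
  shows "SP n t' \<rho>'"
proof -
  obtain m w C where o: "\<forall>j<(m::nat). 0 \<le> w j \<and> clifford n (C j)" "(\<Sum>j<m. w j) = t"
    "op_eq n \<rho> (\<lambda>r c. \<Sum>j<m. complex_of_real (w j) * stab_proj (C j) r c)"
    using assms(1) unfolding SP_def by blast
  have "op_eq n \<rho>' (\<lambda>r c. \<Sum>j<m. complex_of_real (w j) * stab_proj (C j) r c)"
    using assms(2) o(3) by (rule op_eq_trans)
  then show ?thesis unfolding SP_def using o(1,2) assms(3) by blast
qed



lemma sum_if_neq:
  assumes "i < (n::nat)"
  shows "(\<Sum>l<n. if l = i then 0 else f l) = (\<Sum>l\<in>{..<n} - {i}. (f l :: real))"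
  by (rule sum.mono_neutral_cong_right) auto

lemma sum_minus_one:
  assumes "i < (n::nat)"
  shows "(\<Sum>l\<in>{..<n} - {i}. (f l :: real)) = (\<Sum>l<n. f l) - f i"
  using assms by (simp add: sum_diff1)

lemma key_identity:
  fixes B :: "nat \<Rightarrow> nat \<Rightarrow> real" and u v :: "nat \<Rightarrow> real" and n :: nat
  assumes sym: "\<forall>i<n. \<forall>j<n. B i j = B j i"
  defines "\<sigma> \<equiv> \<lambda>i l. if 0 \<le> B i l then 1 else (-1::real)"
  shows "(\<Sum>i<n. (B i i - (\<Sum>j\<in>{..<n}-{i}. \<bar>B i j\<bar>)) * u i * v i) +
     (\<Sum>i<n. \<Sum>l<n. (if l = i then 0 else \<bar>B i l\<bar>) * ((1/2) * (u i + \<sigma> i l * u l) * (v i + \<sigma> i l * v l)))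
   = (\<Sum>i<n. \<Sum>l<n. B i l * u i * v l)"
proof -
  define G1 where "G1 i l = (if l = i then 0 else \<bar>B i l\<bar> / 2 * u i * v i)" for i l
  define G2 where "G2 i l = (if l = i then 0 else B i l / 2 * u i * v l)" for i l
  define G3 where "G3 i l = (if l = i then 0 else B i l / 2 * u l * v i)" for i l
  define G4 where "G4 i l = (if l = i then 0 else \<bar>B i l\<bar> / 2 * u l * v l)" for i l
  have e1: "(if l = i then 0 else \<bar>B i l\<bar>) * ((1/2) * (u i + \<sigma> i l * u l) * (v i + \<sigma> i l * v l))
      = G1 i l + G2 i l + G3 i l + G4 i l" for i l
  proof (cases "l = i")
    case True
    then show ?thesis by (simp add: G1_def G2_def G3_def G4_def)
  next
    case False
    show ?thesis
    proof (cases "0 \<le> B i l")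
      case True
      then have "\<bar>B i l\<bar> = B i l" by simp
      then show ?thesis using False True by (simp add: field_simps G1_def G2_def G3_def G4_def \<sigma>_def)
    next
      case nn: False
      then have "\<bar>B i l\<bar> = - B i l" by simp
      then show ?thesis using False nn by (simp add: field_simps G1_def G2_def G3_def G4_def \<sigma>_def)
    qed
  qed
  have s: "(\<Sum>i<n. \<Sum>l<n. (if l = i then 0 else \<bar>B i l\<bar>) * ((1/2) * (u i + \<sigma> i l * u l) * (v i + \<sigma> i l * v l)))
      = (\<Sum>i<n. \<Sum>l<n. G1 i l) + (\<Sum>i<n. \<Sum>l<n. G2 i l) + (\<Sum>i<n. \<Sum>l<n. G3 i l) + (\<Sum>i<n. \<Sum>l<n. G4 i l)"
    unfolding e1 by (simp add: sum.distrib)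
  have g3: "(\<Sum>i<n. \<Sum>l<n. G3 i l) = (\<Sum>i<n. \<Sum>l<n. G2 i l)"
  proof -
    have "(\<Sum>i<n. \<Sum>l<n. G3 i l) = (\<Sum>l<n. \<Sum>i<n. G3 i l)" by (rule sum.swap)
    also have "\<dots> = (\<Sum>l<n. \<Sum>i<n. G2 l i)"
      using sym by (intro sum.cong refl) (auto simp: G2_def G3_def)
    finally show ?thesis .
  qed
  have g4: "(\<Sum>i<n. \<Sum>l<n. G4 i l) = (\<Sum>i<n. \<Sum>l<n. G1 i l)"
  proof -
    have "(\<Sum>i<n. \<Sum>l<n. G4 i l) = (\<Sum>l<n. \<Sum>i<n. G4 i l)" by (rule sum.swap)
    also have "\<dots> = (\<Sum>l<n. \<Sum>i<n. G1 l i)"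
      using sym by (intro sum.cong refl) (auto simp: G1_def G4_def)
    finally show ?thesis .
  qed
  have g1: "(\<Sum>l<n. G1 i l) = (\<Sum>j\<in>{..<n}-{i}. \<bar>B i j\<bar>) * u i * v i / 2" if "i < n" for i
  proof -
    have "(\<Sum>l<n. G1 i l) = (\<Sum>l<n. (if l = i then 0 else \<bar>B i l\<bar>) * (u i * v i / 2))"
      unfolding G1_def by (intro sum.cong) auto
    also have "\<dots> = (\<Sum>l<n. (if l = i then 0 else \<bar>B i l\<bar>)) * (u i * v i / 2)"
      by (simp add: sum_distrib_right)
    finally show ?thesis using sum_if_neq[OF that, of "\<lambda>l. \<bar>B i l\<bar>"] by simp
  qed
  have g2: "(\<Sum>l<n. G2 i l) = (\<Sum>l<n. B i l * u i * v l) / 2 - B i i * u i * v i / 2" if "i < n" for i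
  proof -
    have "(\<Sum>l<n. G2 i l) = (\<Sum>l<n. if l = i then 0 else B i l * u i * v l / 2)"
      unfolding G2_def by (intro sum.cong) auto
    also have "\<dots> = (\<Sum>l<n. B i l * u i * v l / 2) - B i i * u i * v i / 2"
      unfolding sum_if_neq[OF that] sum_minus_one[OF that] ..
    finally show ?thesis by (simp add: sum_divide_distrib)
  qed
  have G1s: "(\<Sum>i<n. \<Sum>l<n. G1 i l) = (\<Sum>i<n. (\<Sum>j\<in>{..<n}-{i}. \<bar>B i j\<bar>) * u i * v i / 2)"
    using g1 by (intro sum.cong) auto
  have G2s: "(\<Sum>i<n. \<Sum>l<n. G2 i l) = (\<Sum>i<n. \<Sum>l<n. B i l * u i * v l) / 2 - (\<Sum>i<n. B i i * u i * v i) / 2"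
  proof -
    have "(\<Sum>i<n. \<Sum>l<n. G2 i l) = (\<Sum>i<n. (\<Sum>l<n. B i l * u i * v l) / 2 - B i i * u i * v i / 2)"
      using g2 by (intro sum.cong) auto
    then show ?thesis by (simp add: sum_subtractf sum_divide_distrib)
  qed
  have d: "(\<Sum>i<n. (B i i - (\<Sum>j\<in>{..<n}-{i}. \<bar>B i j\<bar>)) * u i * v i)
     = (\<Sum>i<n. B i i * u i * v i) - 2 * (\<Sum>i<n. (\<Sum>j\<in>{..<n}-{i}. \<bar>B i j\<bar>) * u i * v i / 2)"
    by (simp add: sum_subtractf left_diff_distrib sum_distrib_left)
  show ?thesis unfolding s g3 g4 G1s G2s d by simp
qed



definition ind :: "nat \<Rightarrow> nat \<Rightarrow> real" where "ind r i = (if r = 2^i then 1 else 0)"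

lemma clifford_ident: "clifford n ident"
  using clifford_pauli[of 0 n 0] by (simp add: pauli_00)

lemma proj_ident: "stab_proj ident r c = (if r = 0 \<and> c = 0 then 1 else 0)"
  unfolding stab_proj_def ident_def by simp

lemma proj_X: "stab_proj (pauli (2^i) 0) r c = complex_of_real (ind r i * ind c i)"
  unfolding stab_proj_def ind_def by (simp add: pauli_eq)

lemma proj_gate:
  assumes "i < n" "l < n" "i \<noteq> l" "r < 2^n" "c < 2^n"
  shows "stab_proj (gate n i l s) r c =
    complex_of_real ((1/2) * (ind r i + (if s then 1 else -1) * ind r l) * (ind c i + (if s then 1 else -1) * ind c l))"
proof -
  have col: "gate n i l s x 0 = hh * complex_of_real (ind x i + (if s then 1 else -1) * ind x l)" if "x < 2^n" for x
    unfolding gate_col[OF assms(1-3) that] ind_def by simp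
  have g: "hh * complex_of_real X * cnj (hh * complex_of_real Y) = complex_of_real ((1/2) * X * Y)" for X Y
  proof -
    have "hh * complex_of_real X * cnj (hh * complex_of_real Y) = (hh * hh) * complex_of_real (X * Y)"
      by (simp add: algebra_simps)
    then show ?thesis by (simp add: hh_sq)
  qed
  show ?thesis
    unfolding stab_proj_def col[OF assms(4)] col[OF assms(5)] g by (simp add: mult.assoc)
qed

lemma rho_entry:
  "rho_of n p0 B r c = complex_of_real (p0 * (if r = 0 \<and> c = 0 then 1 else 0) + (\<Sum>i<n. \<Sum>l<n. B i l * ind r i * ind c l))"
proof -
  have t: "\<And>i j. (if r = 2^i \<and> c = 2^j then complex_of_real (B i j) else 0) = complex_of_real (B i j * ind r i * ind c j)"
    by (simp add: ind_def)
  show ?thesis unfolding rho_of_def t by (simp add: of_real_sum)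
qed

lemma sufficiency:
  fixes n :: nat and p0 :: real and B :: "nat \<Rightarrow> nat \<Rightarrow> real"
  assumes sym: "\<forall>i<n. \<forall>j<n. B i j = B j i" and p0: "0 \<le> p0" and tr: "p0 + (\<Sum>i<n. B i i) = 1"
    and dd: "\<forall>i<n. B i i \<ge> (\<Sum>j\<in>{..<n} - {i}. \<bar>B i j\<bar>)"
  shows "SP n 1 (rho_of n p0 B)"
proof -
  define \<sigma> where "\<sigma> = (\<lambda>i l. if 0 \<le> B i l then 1 else (-1::real))"
  define d where "d i = B i i - (\<Sum>j\<in>{..<n} - {i}. \<bar>B i j\<bar>)" for i
  define wt where "wt i l = (if l = i then 0 else \<bar>B i l\<bar>)" for i l
  define Cg where "Cg i l = (if l = i then ident else gate n i l (0 \<le> B i l))" for i l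
  have cg: "clifford n (Cg i l)" if "i < n" "l < n" for i l
    unfolding Cg_def using that clifford_ident clifford_gate by auto
  have dpos: "0 \<le> d i" if "i < n" for i using dd that by (simp add: d_def)
  have Xc: "clifford n (pauli (2^i) 0)" if "i < n" for i
    using that by (intro clifford_pauli) simp
  let ?R = "\<lambda>r c. complex_of_real p0 * stab_proj ident r c +
     ((\<Sum>i<n. complex_of_real (d i) * stab_proj (pauli (2^i) 0) r c) +
      (\<Sum>i<n. \<Sum>l<n. complex_of_real (wt i l) * stab_proj (Cg i l) r c))"
  have sp: "SP n (p0 + ((\<Sum>i<n. d i) + (\<Sum>i<n. \<Sum>l<n. wt i l))) ?R"
  proof (rule SP_add[OF SP_single[OF clifford_ident p0] SP_add])
    show "SP n (\<Sum>i<n. d i) (\<lambda>r c. \<Sum>i<n. complex_of_real (d i) * stab_proj (pauli (2^i) 0) r c)"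
    proof (rule SP_sum)
      fix i assume i: "i \<in> {..<n}"
      show "SP n (d i) (\<lambda>r c. complex_of_real (d i) * stab_proj (pauli (2^i) 0) r c)"
        using i by (intro SP_single Xc dpos) auto
    qed simp
    show "SP n (\<Sum>i<n. \<Sum>l<n. wt i l) (\<lambda>r c. \<Sum>i<n. \<Sum>l<n. complex_of_real (wt i l) * stab_proj (Cg i l) r c)"
    proof (rule SP_sum)
      fix i assume i: "i \<in> {..<n}"
      show "SP n (\<Sum>l<n. wt i l) (\<lambda>r c. \<Sum>l<n. complex_of_real (wt i l) * stab_proj (Cg i l) r c)"
      proof (rule SP_sum)
        fix l assume l: "l \<in> {..<n}"
        show "SP n (wt i l) (\<lambda>r c. complex_of_real (wt i l) * stab_proj (Cg i l) r c)"
          using i l by (intro SP_single cg) (auto simp: wt_def)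
      qed simp
    qed simp
  qed
  have tot: "p0 + ((\<Sum>i<n. d i) + (\<Sum>i<n. \<Sum>l<n. wt i l)) = 1"
  proof -
    have w1: "(\<Sum>l<n. wt i l) = (\<Sum>j\<in>{..<n} - {i}. \<bar>B i j\<bar>)" if "i < n" for i
      unfolding wt_def by (rule sum_if_neq[OF that])
    have "(\<Sum>i<n. \<Sum>l<n. wt i l) = (\<Sum>i<n. (\<Sum>j\<in>{..<n} - {i}. \<bar>B i j\<bar>))"
      by (rule sum.cong[OF refl]) (simp add: w1)
    then have "(\<Sum>i<n. d i) + (\<Sum>i<n. \<Sum>l<n. wt i l) = (\<Sum>i<n. B i i)"
      unfolding d_def by (simp add: sum_subtractf)
    then show ?thesis using tr by simp
  qed
  have eq: "op_eq n (rho_of n p0 B) ?R"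
    unfolding op_eq_def
  proof (intro allI impI)
    fix r c :: nat assume rc: "r < 2^n" "c < 2^n"
    have t: "complex_of_real (wt i l) * stab_proj (Cg i l) r c =
       complex_of_real (wt i l * ((1/2) * (ind r i + \<sigma> i l * ind r l) * (ind c i + \<sigma> i l * ind c l)))"
      if "i < n" "l < n" for i l
      using proj_gate[OF that(1,2) _ rc, of "0 \<le> B i l"]
      by (cases "l = i") (auto simp: wt_def Cg_def \<sigma>_def)
    have "?R r c = complex_of_real (p0 * (if r = 0 \<and> c = 0 then 1 else 0) +
       ((\<Sum>i<n. d i * ind r i * ind c i) +
        (\<Sum>i<n. \<Sum>l<n. wt i l * ((1/2) * (ind r i + \<sigma> i l * ind r l) * (ind c i + \<sigma> i l * ind c l)))))"
    proof -
      have T: "(\<Sum>i<n. \<Sum>l<n. complex_of_real (wt i l) * stab_proj (Cg i l) r c) =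
        (\<Sum>i<n. \<Sum>l<n. complex_of_real (wt i l * ((1/2) * (ind r i + \<sigma> i l * ind r l) * (ind c i + \<sigma> i l * ind c l))))"
        by (intro sum.cong refl) (simp add: t)
      show ?thesis unfolding T by (simp add: proj_ident proj_X of_real_sum mult.assoc)
    qed
    also have "\<dots> = rho_of n p0 B r c"
      unfolding rho_entry
      using key_identity[OF sym, of "ind r" "ind c"]
      by (simp add: d_def wt_def \<sigma>_def)
    finally show "rho_of n p0 B r c = ?R r c" by simp
  qed
  show ?thesis by (rule SP_cong[OF sp eq tot])
qed



section \<open>Necessity: Pauli-Z expectations of stabilizer states\<close>

lemma cliffordU:
  assumes "clifford n C"
  shows "op_eq n (mmul n C (adj C)) ident" "op_eq n (mmul n (adj C) C) ident"
  using assms by (simp_all add: clifford_def unitary_op_def)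

lemma unconj:
  assumes C: "clifford n C" and h: "op_eq n (mmul n (mmul n C A) (adj C)) Bm"
  shows "op_eq n A (mmul n (mmul n (adj C) Bm) C)"
proof -
  have e: "mmul n (mmul n (adj C) (mmul n (mmul n C A) (adj C))) C
     = mmul n (mmul n (adj C) C) (mmul n A (mmul n (adj C) C))"
    by (simp only: mmul_assoc)
  have "op_eq n (mmul n (mmul n (adj C) C) (mmul n A (mmul n (adj C) C))) (mmul n ident (mmul n A ident))"
    by (rule mmul_cong[OF cliffordU(2)[OF C] mmul_cong[OF op_eq_refl cliffordU(2)[OF C]]])
  also have "op_eq n \<dots> (mmul n A ident)" by (rule mmul_ident_l)
  also have "op_eq n \<dots> A" by (rule mmul_ident_r)
  finally have 1: "op_eq n (mmul n (mmul n (adj C) (mmul n (mmul n C A) (adj C))) C) A" unfolding e .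
  have 2: "op_eq n (mmul n (mmul n (adj C) (mmul n (mmul n C A) (adj C))) C) (mmul n (mmul n (adj C) Bm) C)"
    by (rule mmul_cong[OF mmul_cong[OF op_eq_refl h] op_eq_refl])
  show ?thesis using op_eq_trans[OF op_eq_sym[OF 1] 2] .
qed

lemma spauli_at: "spauli p x z r c = p * (if r = xor c x then sg z c else 0)"
  by (simp add: spauli_def pauli_eq)

lemma spauli_zero:
  assumes "x < 2^n" "op_eq n (spauli p x z) (\<lambda>r c. 0)"
  shows "p = 0"
proof -
  have "spauli p x z x 0 = 0" using assms by (simp add: op_eq_def)
  then show ?thesis by (simp add: spauli_at)
qed

lemma spauli_inj:
  assumes "x1 < 2^n" "z1 < 2^n" "x2 < 2^n" "z2 < 2^n" "\<alpha> \<noteq> 0"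
    and h: "op_eq n (spauli \<alpha> x1 z1) (spauli \<beta> x2 z2)"
  shows "x1 = x2 \<and> z1 = z2"
proof -
  have "spauli \<alpha> x1 z1 x1 0 = spauli \<beta> x2 z2 x1 0" using h assms(1) by (simp add: op_eq_def)
  then have a: "\<alpha> = \<beta> * (if x1 = x2 then 1 else 0)" by (simp add: spauli_at)
  then have x: "x1 = x2" using assms(5) by (auto split: if_splits)
  with a have ab: "\<alpha> = \<beta>" by simp
  have "bit z1 k = bit z2 k" for k
  proof (cases "k < n")
    case True
    have lt: "xor (2^k) x1 < 2^n" using True assms(1) by (intro xor_less_pow) auto
    have "spauli \<alpha> x1 z1 (xor (2^k) x1) (2^k) = spauli \<beta> x2 z2 (xor (2^k) x1) (2^k)"
      using h lt True by (simp add: op_eq_def)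
    then have "\<alpha> * sg z1 (2^k) = \<alpha> * sg z2 (2^k)" using x ab by (simp add: spauli_at)
    then have "sg z1 (2^k) = sg z2 (2^k)" using assms(5) by simp
    then show ?thesis by (auto simp: sg_pow' split: if_splits)
  next
    case False
    then show ?thesis using assms(2,4) by (auto simp: less_pow_iff_bits)
  qed
  then have "z1 = z2" by (simp add: bit_eq_iff)
  with x show ?thesis by simp
qed

lemma conj_spauli:
  "mmul n (mmul n A (spauli p x z)) D = (\<lambda>r c. p * mmul n (mmul n A (pauli x z)) D r c)"
  unfolding spauli_def by (simp add: mmul_scal_l mmul_scal_r)

lemma clifford_Zconj:
  assumes C: "clifford n C" and k: "k < n"
  shows "\<exists>ph xa za. xa < 2^n \<and> za < 2^n \<and> op_eq n (mmul n (mmul n (adj C) (pauli 0 (2^k))) C) (spauli ph xa za)"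
proof -
  define S where "S = {..<(2::nat)^n} \<times> {..<(2::nat)^n}"
  define Pr where "Pr a q ph \<longleftrightarrow> q \<in> S \<and> op_eq n (mmul n (mmul n C (pauli (fst a) (snd a))) (adj C)) (spauli ph (fst q) (snd q))" for a q ph
  have ex: "\<exists>q ph. Pr a q ph" if aS: "a \<in> S" for a
  proof -
    have fs: "fst a < 2^n" "snd a < 2^n" using aS by (auto simp: S_def)
    obtain ph x' z' where xzph: "x' < 2^n" "z' < 2^n"
      "op_eq n (mmul n (mmul n C (pauli (fst a) (snd a))) (adj C)) (\<lambda>r c. ph * pauli x' z' r c)"
      by (rule clifford_conjD[OF C fs])
    then show ?thesis unfolding Pr_def S_def spauli_def by (intro exI[of _ "(x', z')"] exI[of _ ph]) auto
  qed
  define g where "g a = (SOME q. \<exists>ph. Pr a q ph)" for a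
  have g: "\<exists>ph. Pr a (g a) ph" if "a \<in> S" for a
    unfolding g_def using someI_ex[OF ex[OF that]] .
  have bk: "op_eq n (pauli (fst a) (snd a)) (\<lambda>r c. ph * mmul n (mmul n (adj C) (pauli (fst q) (snd q))) C r c)"
    if "Pr a q ph" for a q ph
    using unconj[OF C, of "pauli (fst a) (snd a)" "spauli ph (fst q) (snd q)"] that
    unfolding Pr_def conj_spauli by blast
  have pnz: "ph \<noteq> 0" if "Pr a q ph" "a \<in> S" for a q ph
  proof
    assume "ph = 0"
    then have "op_eq n (spauli 1 (fst a) (snd a)) (\<lambda>r c. 0)"
      using bk[OF that(1)] by (simp add: pauli_spauli)
    then show False using spauli_zero[of "fst a" n 1] that(2) by (auto simp: S_def)
  qed
  have inj: "inj_on g S"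
  proof (rule inj_onI)
    fix a b assume a: "a \<in> S" and b: "b \<in> S" and gab: "g a = g b"
    obtain pa where pa: "Pr a (g a) pa" using g[OF a] by blast
    obtain pb where pb: "Pr b (g a) pb" using g[OF b] gab by auto
    let ?M = "mmul n (mmul n (adj C) (pauli (fst (g a)) (snd (g a)))) C"
    have "op_eq n (spauli pb (fst a) (snd a)) (\<lambda>r c. pb * (pa * ?M r c))"
      unfolding spauli_def by (rule op_eq_scal[OF bk[OF pa]])
    moreover have "op_eq n (spauli pa (fst b) (snd b)) (\<lambda>r c. pa * (pb * ?M r c))"
      unfolding spauli_def by (rule op_eq_scal[OF bk[OF pb]])
    ultimately have "op_eq n (spauli pb (fst a) (snd a)) (spauli pa (fst b) (snd b))"
      unfolding op_eq_def by (simp add: mult.left_commute)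
    then have "fst a = fst b \<and> snd a = snd b"
      using a b pnz[OF pb b] by (intro spauli_inj[where n=n]) (auto simp: S_def)
    then show "a = b" by (simp add: prod_eq_iff)
  qed
  have sub: "g ` S \<subseteq> S" using g unfolding Pr_def by auto
  have fin: "finite S" unfolding S_def by simp
  have "g ` S = S" by (rule endo_inj_surj[OF fin sub inj])
  moreover have "(0, 2^k) \<in> S" using k by (simp add: S_def)
  ultimately obtain a where a: "a \<in> S" "g a = (0, 2^k)" by (metis imageE)
  obtain ph where ph: "Pr a (0, 2^k) ph" using g[OF a(1)] a(2) by auto
  have phnz: "ph \<noteq> 0" by (rule pnz[OF ph a(1)])
  have "op_eq n (\<lambda>r c. (1/ph) * pauli (fst a) (snd a) r c)
           (\<lambda>r c. (1/ph) * (ph * mmul n (mmul n (adj C) (pauli 0 (2^k))) C r c))"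
    by (rule op_eq_scal) (use bk[OF ph] in simp)
  then have "op_eq n (mmul n (mmul n (adj C) (pauli 0 (2^k))) C) (spauli (1/ph) (fst a) (snd a))"
    using phnz unfolding op_eq_def spauli_def by simp
  moreover have "fst a < 2^n" "snd a < 2^n" using a(1) by (auto simp: S_def)
  ultimately show ?thesis by blast
qed



lemma Zsq: "op_eq n (mmul n (pauli 0 z) (pauli 0 z)) ident"
  unfolding op_eq_def by (simp add: mmul_pauli pauli_00)

lemma cnj_mult_self: "cnj x * x = complex_of_real ((cmod x)^2)"
  using complex_norm_square[of x] by (simp add: mult.commute)

lemma cnj_s_self: "cnj y * complex_of_real s * y = complex_of_real ((cmod y)^2 * s)"
proof -
  have "cnj y * complex_of_real s * y = (cnj y * y) * complex_of_real s" by (simp add: algebra_simps)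
  also have "\<dots> = complex_of_real ((cmod y)^2) * complex_of_real s" by (simp only: cnj_mult_self)
  finally show ?thesis by simp
qed

lemma sg_pow_real: "sg (2^k) b = complex_of_real (if bit b k then -1 else 1)"
  by (simp add: sg_pow)

lemma Zconj_entry:
  assumes "0 < (2::nat)^n"
  shows "mmul n (mmul n (adj C) (pauli 0 (2^k))) C 0 0 =
    complex_of_real (\<Sum>b<2^n. (cmod (C b 0))^2 * (if bit b k then -1 else 1))"
proof -
  have 1: "mmul n (adj C) (pauli 0 (2^k)) 0 b = cnj (C b 0) * sg (2^k) b" if "b < 2^n" for b
    unfolding mmul_def
    by (subst sum_single[where a=b]) (auto simp: that pauli_eq adj_def)
  have "mmul n (mmul n (adj C) (pauli 0 (2^k))) C 0 0 = (\<Sum>b<2^n. cnj (C b 0) * sg (2^k) b * C b 0)"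
    unfolding mmul_def[of n "mmul n (adj C) (pauli 0 (2^k))" C]
    by (intro sum.cong refl) (simp add: 1)
  also have "\<dots> = (\<Sum>b<2^n. complex_of_real ((cmod (C b 0))^2 * (if bit b k then -1 else 1)))"
    by (intro sum.cong refl) (simp only: sg_pow_real cnj_s_self)
  finally show ?thesis by (simp add: of_real_sum)
qed

lemma clifford_norm:
  assumes C: "clifford n C"
  shows "(\<Sum>b<2^n. (cmod (C b 0))^2) = 1"
proof -
  have "mmul n (adj C) C 0 0 = ident 0 0" using cliffordU(2)[OF C] by (simp add: op_eq_def)
  then have "(\<Sum>b<2^n. cnj (C b 0) * C b 0) = 1" by (simp add: mmul_def adj_def ident_def)
  then have "complex_of_real (\<Sum>b<2^n. (cmod (C b 0))^2) = 1"
    by (simp add: cnj_mult_self of_real_sum)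
  then show ?thesis by (metis of_real_1 of_real_eq_iff)
qed

lemma clifford_sq:
  assumes C: "clifford n C"
  shows "op_eq n (mmul n (mmul n (mmul n (adj C) Z) C) (mmul n (mmul n (adj C) Z) C)) (mmul n (mmul n (adj C) (mmul n Z Z)) C)"
proof -
  have e1: "mmul n (mmul n (mmul n (adj C) Z) C) (mmul n (mmul n (adj C) Z) C)
      = mmul n (mmul n (adj C) Z) (mmul n (mmul n C (adj C)) (mmul n Z C))"
    by (simp only: mmul_assoc)
  have "op_eq n (mmul n (mmul n (adj C) Z) (mmul n (mmul n C (adj C)) (mmul n Z C)))
     (mmul n (mmul n (adj C) Z) (mmul n ident (mmul n Z C)))"
    by (rule mmul_cong[OF op_eq_refl mmul_cong[OF cliffordU(1)[OF C] op_eq_refl]])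
  also have "op_eq n \<dots> (mmul n (mmul n (adj C) Z) (mmul n Z C))"
    by (rule mmul_cong[OF op_eq_refl mmul_ident_l])
  finally show ?thesis unfolding e1 by (simp only: mmul_assoc)
qed

lemma Zexp_values:
  assumes C: "clifford n C" and k: "k < n"
  shows "(\<Sum>b<2^n. (cmod (C b 0))^2 * (if bit b k then -1 else 1)) \<in> {-1, 0, 1}"
proof -
  define v where "v = (\<Sum>b<2^n. (cmod (C b 0))^2 * (if bit b k then -1 else (1::real)))"
  define M where "M = mmul n (mmul n (adj C) (pauli 0 (2^k))) C"
  obtain ph xa za where o: "xa < 2^n" "za < 2^n" "op_eq n M (spauli ph xa za)"
    using clifford_Zconj[OF C k] unfolding M_def by blast
  have Mv: "M 0 0 = complex_of_real v" unfolding M_def v_def by (rule Zconj_entry) simp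
  have M0: "M 0 0 = (if xa = 0 then ph else 0)"
    using o(3) by (simp add: op_eq_def spauli_at)
  have "op_eq n (mmul n M M) (mmul n (mmul n (adj C) ident) C)"
    unfolding M_def
    by (rule op_eq_trans[OF clifford_sq[OF C] mmul_cong[OF mmul_cong[OF op_eq_refl Zsq] op_eq_refl]])
  also have "op_eq n \<dots> (mmul n (adj C) C)"
    by (rule mmul_cong[OF mmul_ident_r op_eq_refl])
  also have "op_eq n \<dots> ident" by (rule cliffordU(2)[OF C])
  finally have sq: "op_eq n (mmul n M M) ident" .
  have "op_eq n (mmul n M M) (mmul n (spauli ph xa za) (spauli ph xa za))"
    by (rule mmul_cong[OF o(3) o(3)])
  also have "op_eq n \<dots> (spauli (ph * ph * sg za xa) (xor xa xa) (xor za za))"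
    by (rule mmul_spauli[OF o(1)])
  finally have "op_eq n ident (spauli (ph * ph * sg za xa) 0 0)"
    using sq by (metis op_eq_sym op_eq_trans xor_self_eq)
  then have "ident 0 0 = spauli (ph * ph * sg za xa) 0 0 0 0" unfolding op_eq_def by simp
  then have pp: "ph * ph * sg za xa = 1"
    by (simp add: spauli_at ident_def)
  show ?thesis
  proof (cases "xa = 0")
    case True
    then have "ph * ph = 1" using pp by simp
    then have "ph = 1 \<or> ph = -1"
      by (metis add.inverse_inverse mult_cancel_right1 square_eq_1_iff)
    then have "complex_of_real v = 1 \<or> complex_of_real v = -1" using Mv M0 True by simp
    then have "v = 1 \<or> v = -1" by (metis of_real_1 of_real_eq_iff of_real_minus)
    then show ?thesis unfolding v_def by blast
  next
    case False
    then have "complex_of_real v = 0" using Mv M0 by simp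
    then have "v = 0" by (simp only: of_real_eq_0_iff)
    then show ?thesis unfolding v_def by simp
  qed
qed



lemma amp_half:
  assumes C: "clifford n C" and k: "k < n"
    and supp: "\<And>b. b < 2^n \<Longrightarrow> b \<noteq> 0 \<Longrightarrow> (\<forall>l<n. b \<noteq> 2^l) \<Longrightarrow> C b 0 = 0"
  shows "(cmod (C (2^k) 0))^2 = 0 \<or> (cmod (C (2^k) 0))^2 \<ge> 1/2"
proof -
  define a where "a b = (cmod (C b 0))^2" for b
  have pk: "(2::nat)^k < 2^n" using k by simp
  have e: "(\<Sum>b<2^n. a b * (if bit b k then -1 else 1)) = (\<Sum>b<2^n. a b) - 2 * (\<Sum>b<2^n. if bit b k then a b else 0)"
  proof -
    have "\<And>b. a b * (if bit b k then -1 else 1) = a b - 2 * (if bit b k then a b else 0)" by simp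
    then show ?thesis by (simp only: sum_subtractf sum_distrib_left)
  qed
  have s: "(\<Sum>b<2^n. if bit b k then a b else 0) = a (2^k)"
  proof (subst sum_single[where a="2^k"])
    show "(if bit b k then a b else 0) = 0" if "b \<in> {..<2^n}" "b \<noteq> 2^k" for b
    proof (cases "bit b k")
      case True
      have "b \<noteq> 0" proof assume "b = 0" with True show False by simp qed
      moreover have "\<forall>l<n. b \<noteq> 2^l" using True that(2) by auto
      ultimately have "C b 0 = 0" using supp that(1) by simp
      then show ?thesis by (simp add: a_def)
    qed simp
  qed (auto simp: pk)
  have "(\<Sum>b<2^n. a b * (if bit b k then -1 else 1)) \<in> {-1, 0, 1}"
    using Zexp_values[OF C k] unfolding a_def .
  then have "1 - 2 * a (2^k) \<in> {-1, 0, 1}"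
    unfolding e s using clifford_norm[OF C] by (simp add: a_def)
  then show ?thesis unfolding a_def by auto
qed

lemma amp_bound:
  fixes M :: "nat \<Rightarrow> real"
  assumes nn: "\<And>l. 0 \<le> M l" and q: "\<And>l. l < n \<Longrightarrow> (M l)^2 = 0 \<or> (M l)^2 \<ge> 1/2"
    and tot: "(\<Sum>l<n. (M l)^2) \<le> 1" and i: "i < n"
  shows "(\<Sum>l\<in>{..<n} - {i}. M i * M l) \<le> (M i)^2"
proof (cases "M i = 0")
  case True
  then show ?thesis by simp
next
  case False
  then have mi: "(M i)^2 \<ge> 1/2" using q[OF i] by auto
  have rest: "(\<Sum>l\<in>{..<n} - {i}. (M l)^2) = (\<Sum>l<n. (M l)^2) - (M i)^2"
    using i by (simp add: sum_diff1)
  have each: "M i * M l \<le> (M l)^2" if l: "l \<in> {..<n} - {i}" for l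
  proof (cases "M l = 0")
    case True then show ?thesis by simp
  next
    case False
    then have ml: "(M l)^2 \<ge> 1/2" using q l by auto
    have "(M i)^2 + (M l)^2 = (\<Sum>l\<in>{i, l}. (M l)^2)" using l by auto
    also have "\<dots> \<le> (\<Sum>l<n. (M l)^2)" using l i by (intro sum_mono2) auto
    finally have "(M i)^2 \<le> (M l)^2" using tot ml by linarith
    then have "M i \<le> M l" using nn[of i] nn[of l] by (simp add: power_mono_iff)
    then show ?thesis using nn by (simp add: power2_eq_square mult_right_mono)
  qed
  have "(\<Sum>l\<in>{..<n} - {i}. M i * M l) \<le> (\<Sum>l\<in>{..<n} - {i}. (M l)^2)"
    by (rule sum_mono) (rule each)
  also have "\<dots> \<le> (M i)^2" unfolding rest using tot mi by linarith
  finally show ?thesis .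
qed

lemma pow_sum_le:
  fixes f :: "nat \<Rightarrow> real"
  assumes "\<And>b. 0 \<le> f b"
  shows "(\<Sum>l<n. f (2^l)) \<le> (\<Sum>b<2^n. f b)"
proof -
  have inj: "inj_on (\<lambda>l::nat. (2::nat)^l) {..<n}" by (auto simp: inj_on_def)
  have "(\<Sum>l<n. f (2^l)) = (\<Sum>b\<in>(\<lambda>l. 2^l) ` {..<n}. f b)"
    by (simp add: sum.reindex[OF inj])
  also have "\<dots> \<le> (\<Sum>b<2^n. f b)"
    using assms by (intro sum_mono2) auto
  finally show ?thesis .
qed



lemma ind_pow: "ind (2^a) i = (if i = a then 1 else 0)"
  by (auto simp: ind_def)

lemma rho_pow:
  assumes "a < n" "b < n"
  shows "rho_of n p0 B (2^a) (2^b) = complex_of_real (B a b)"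
proof -
  have "(\<Sum>i<n. \<Sum>l<n. B i l * ind (2^a) i * ind (2^b) l) = (\<Sum>i<n. if i = a then B i b else 0)"
    by (intro sum.cong refl) (simp add: ind_pow assms if_distrib cong: if_cong)
  also have "\<dots> = B a b" using assms by simp
  finally show ?thesis unfolding rho_entry by simp
qed

lemma rho_zero:
  assumes "b \<noteq> 0" "\<forall>l<n. b \<noteq> 2^l"
  shows "rho_of n p0 B b b = 0"
  unfolding rho_entry using assms by (simp add: ind_def)

lemma psi_sq: "x * cnj x = complex_of_real ((cmod x)^2)"
  using complex_norm_square[of x] by simp

lemma necessity:
  assumes "rho_of n p0 B \<in> stab_polytope n"
  shows "\<forall>i<n. B i i \<ge> (\<Sum>j\<in>{..<n} - {i}. \<bar>B i j\<bar>)"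
proof -
  obtain m w C where o: "\<forall>j<(m::nat). 0 \<le> w j \<and> clifford n (C j)"
    "op_eq n (rho_of n p0 B) (\<lambda>r c. \<Sum>j<m. complex_of_real (w j) * stab_proj (C j) r c)"
    using assms unfolding stab_polytope_def by blast
  define M where "M j l = cmod (C j (2^l) 0)" for j l
  have ent: "rho_of n p0 B r c = (\<Sum>j<m. complex_of_real (w j) * (C j r 0 * cnj (C j c 0)))"
    if "r < 2^n" "c < 2^n" for r c
    using o(2) that unfolding op_eq_def stab_proj_def by simp
  have supp: "C j b 0 = 0" if j: "j < m" "0 < w j" and b: "b < 2^n" "b \<noteq> 0" "\<forall>l<n. b \<noteq> 2^l" for j b
  proof -
    have "complex_of_real (\<Sum>j<m. w j * (cmod (C j b 0))^2) = 0"
      using ent[OF b(1) b(1)] rho_zero[OF b(2,3), of p0 B]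
      by (simp add: psi_sq of_real_sum)
    then have "(\<Sum>j<m. w j * (cmod (C j b 0))^2) = 0" by (simp only: of_real_eq_0_iff)
    moreover have "\<forall>j\<in>{..<m}. 0 \<le> w j * (cmod (C j b 0))^2" using o(1) by auto
    ultimately have "\<forall>j\<in>{..<m}. w j * (cmod (C j b 0))^2 = 0"
      using sum_nonneg_eq_0_iff[of "{..<m}" "\<lambda>j. w j * (cmod (C j b 0))^2"] by simp
    then have "w j * (cmod (C j b 0))^2 = 0" using j(1) by simp
    then show ?thesis using j(2) by simp
  qed
  have perj: "w j * (\<Sum>l\<in>{..<n} - {i}. M j i * M j l) \<le> w j * (M j i)^2" if j: "j < m" and i: "i < n" for j i
  proof (cases "w j = 0")
    case True then show ?thesis by simp
  next
    case False
    moreover have "0 \<le> w j" using o(1) j by simp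
    ultimately have wp: "0 < w j" by simp
    have C: "clifford n (C j)" using o(1) j by simp
    have "(\<Sum>l\<in>{..<n} - {i}. M j i * M j l) \<le> (M j i)^2"
    proof (rule amp_bound[OF _ _ _ i])
      show "0 \<le> M j l" for l by (simp add: M_def)
      show "(M j l)^2 = 0 \<or> (M j l)^2 \<ge> 1/2" if "l < n" for l
        unfolding M_def by (rule amp_half[OF C that]) (rule supp[OF j wp], auto)
      have "(\<Sum>l<n. (M j l)^2) \<le> (\<Sum>b<2^n. (cmod (C j b 0))^2)"
        unfolding M_def by (rule pow_sum_le) simp
      then show "(\<Sum>l<n. (M j l)^2) \<le> 1" using clifford_norm[OF C] by simp
    qed
    then show ?thesis using wp by (simp add: mult_left_mono)
  qed
  show ?thesis
  proof (intro allI impI)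
    fix i assume i: "i < n"
    have pi: "(2::nat)^i < 2^n" using i by simp
    have bl: "\<bar>B i l\<bar> \<le> (\<Sum>j<m. w j * (M j i * M j l))" if l: "l < n" for l
    proof -
      have pl: "(2::nat)^l < 2^n" using l by simp
      have "\<bar>B i l\<bar> = cmod (complex_of_real (B i l))" by simp
      also have "\<dots> = cmod (\<Sum>j<m. complex_of_real (w j) * (C j (2^i) 0 * cnj (C j (2^l) 0)))"
        using ent[OF pi pl] rho_pow[OF i l, of p0 B] by simp
      also have "\<dots> \<le> (\<Sum>j<m. cmod (complex_of_real (w j) * (C j (2^i) 0 * cnj (C j (2^l) 0))))"
        by (rule norm_sum)
      also have "\<dots> = (\<Sum>j<m. w j * (M j i * M j l))"
        using o(1) by (intro sum.cong refl) (simp add: M_def norm_mult)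
      finally show ?thesis .
    qed
    have bii: "B i i = (\<Sum>j<m. w j * (M j i)^2)"
    proof -
      have "complex_of_real (B i i) = (\<Sum>j<m. complex_of_real (w j) * (C j (2^i) 0 * cnj (C j (2^i) 0)))"
        using ent[OF pi pi] rho_pow[OF i i, of p0 B] by simp
      also have "\<dots> = complex_of_real (\<Sum>j<m. w j * (M j i)^2)"
        by (simp add: psi_sq of_real_sum M_def)
      finally show ?thesis by (simp only: of_real_eq_iff)
    qed
    have "(\<Sum>l\<in>{..<n} - {i}. \<bar>B i l\<bar>) \<le> (\<Sum>l\<in>{..<n} - {i}. \<Sum>j<m. w j * (M j i * M j l))"
      using bl by (intro sum_mono) auto
    also have "\<dots> = (\<Sum>j<m. w j * (\<Sum>l\<in>{..<n} - {i}. M j i * M j l))"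
      by (simp add: sum_distrib_left sum.swap[of _ "{..<n} - {i}"])
    also have "\<dots> \<le> (\<Sum>j<m. w j * (M j i)^2)"
      using perj i by (intro sum_mono) auto
    finally show "B i i \<ge> (\<Sum>j\<in>{..<n} - {i}. \<bar>B i j\<bar>)" using bii by simp
  qed
qed

theorem lemmaS1:
  fixes n :: nat and p0 :: real and B :: "nat \<Rightarrow> nat \<Rightarrow> real"
  assumes "n \<ge> 2"
    and "\<forall>i<n. \<forall>j<n. B i j = B j i"
    and "\<forall>x :: nat \<Rightarrow> real. 0 \<le> (\<Sum>i<n. \<Sum>j<n. x i * B i j * x j)"
    and "p0 + (\<Sum>i<n. B i i) = 1"
    and "density_op n (rho_of n p0 B)"
  shows "rho_of n p0 B \<in> stab_polytope n \<longleftrightarrow>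
         (\<forall>i<n. B i i \<ge> (\<Sum>j\<in>{..<n} - {i}. \<bar>B i j\<bar>))"
proof
  assume "rho_of n p0 B \<in> stab_polytope n"
  then show "\<forall>i<n. B i i \<ge> (\<Sum>j\<in>{..<n} - {i}. \<bar>B i j\<bar>)" by (rule necessity)
next
  assume dd: "\<forall>i<n. B i i \<ge> (\<Sum>j\<in>{..<n} - {i}. \<bar>B i j\<bar>)"
  define v0 where "v0 = (\<lambda>r::nat. if r = 0 then (1::complex) else 0)"
  have all: "\<forall>v :: nat \<Rightarrow> complex. 0 \<le> Re (\<Sum>r<2^n. \<Sum>c<2^n. cnj (v r) * rho_of n p0 B r c * v c)"
    using assms(5) unfolding density_op_def by blast
  have "0 \<le> Re (\<Sum>r<2^n. \<Sum>c<2^n. cnj (v0 r) * rho_of n p0 B r c * v0 c)"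
    using spec[OF all, of v0] .
  also have "(\<Sum>r<2^n. \<Sum>c<2^n. cnj (v0 r) * rho_of n p0 B r c * v0 c) = rho_of n p0 B 0 0"
  proof -
    have inner: "(\<Sum>c<2^n. cnj (v0 r) * rho_of n p0 B r c * v0 c) = cnj (v0 r) * rho_of n p0 B r 0" for r
      by (subst sum_single[where a=0]) (auto simp: v0_def)
    show ?thesis unfolding inner by (subst sum_single[where a=0]) (auto simp: v0_def)
  qed
  also have "rho_of n p0 B 0 0 = complex_of_real p0"
    unfolding rho_entry by (simp add: ind_def)
  finally have p0: "0 \<le> p0" by simp
  show "rho_of n p0 B \<in> stab_polytope n"
    unfolding stab_polytope_SP by (rule sufficiency[OF assms(2) p0 assms(4) dd])
qed


end
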